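(* Let $X=\{x_j:j\in J\}\subset\mathbb{R}^2$ be finite with $n=|J|$. Then the quadratic min-power centre $s^*$ of $X$ lies in $\mathrm{conv}(\mathcal{M})$, where $\mathcal{M}=\{M_j:j\in J\}$, $M_j=\frac{1}{n+1}\big(x_j+\sum_{i\in J}x_i\big)$.
   Context: $s^*$ is the unique minimiser of $P(s)=\sum_{i\in J}\|s-x_i\|^2+\max_{i\in J}\|s-x_i\|^2$. *)

theory Defs
  imports "HOL-Analysis.Analysis"
begin

definition qmp_P :: "'j set \<Rightarrow> ('j \<Rightarrow> real^2) \<Rightarrow> real^2 \<Rightarrow> real" where
  "qmp_P J x s = (\<Sum>i\<in>J. (norm (s - x i))\<^sup>2) + (MAX i\<in>J. (norm (s - x i))\<^sup>2)"

definition qmp_centre :: "'j set \<Rightarrow> ('j \<Rightarrow> real^2) \<Rightarrow> real^2" where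
  "qmp_centre J x = (THE s. \<forall>t. qmp_P J x s \<le> qmp_P J x t)"

end

theory Submission
  imports Defs
begin

lemma cont_Max_fam:
  assumes "finite I" "I \<noteq> {}" "\<And>i. i \<in> I \<Longrightarrow> continuous_on S (f i)"
  shows "continuous_on S (\<lambda>s. MAX i\<in>I. (f i s :: real))"
  using assms
proof (induction I rule: finite_ne_induct)
  case (singleton x)
  then show ?case by simp
next
  case (insert a F)
  have "(\<lambda>s. MAX i\<in>insert a F. f i s) = (\<lambda>s. max (f a s) (MAX i\<in>F. f i s))"
    using insert by simp
  then show ?case using insert by (auto intro!: continuous_on_max)
qed

lemma pt_split:
  fixes s p x :: "real^2"
  shows "(norm (s - x))\<^sup>2 = (norm (p - x))\<^sup>2 + (norm (s - p))\<^sup>2 + 2 * inner (s - p) (p - x)"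
proof -
  have "s - x = (s - p) + (p - x)" by simp
  then have "(norm (s - x))\<^sup>2 = (norm ((s - p) + (p - x)))\<^sup>2" by simp
  also have "\<dots> = (norm (p - x))\<^sup>2 + (norm (s - p))\<^sup>2 + 2 * inner (s - p) (p - x)"
    unfolding power2_norm_eq_inner by (simp add: inner_simps inner_commute algebra_simps)
  finally show ?thesis .
qed

lemma pt_mid:
  fixes s t x :: "real^2"
  shows "(norm ((1/2) *\<^sub>R (s + t) - x))\<^sup>2 = ((norm (s - x))\<^sup>2 + (norm (t - x))\<^sup>2)/2 - (norm (s - t))\<^sup>2 / 4"
  unfolding power2_norm_eq_inner by (simp add: inner_simps inner_commute field_simps)

lemma aux1: "(A::real) = B \<Longrightarrow> B = (a + b)/2 - d/4 \<Longrightarrow> a \<le> A' \<Longrightarrow> b \<le> B' \<Longrightarrow> 0 \<le> d \<Longrightarrow> A \<le> (A' + B')/2"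
  by argo

lemma aux2: "(0::real) < D \<Longrightarrow> p \<le> q \<Longrightarrow> r \<le> p \<Longrightarrow> p \<le> r \<Longrightarrow> q \<le> (p + r)/2 - D \<Longrightarrow> False"
  by argo

lemma max_attained:
  fixes f :: "'j \<Rightarrow> real"
  assumes "finite J" "J \<noteq> {}"
  obtains k where "k \<in> J" "(MAX i\<in>J. f i) = f k"
proof -
  have "(MAX i\<in>J. f i) \<in> f ` J" using assms by (intro Max_in) auto
  then show ?thesis using that by auto
qed

lemma proj_decrease:
  fixes J :: "'j set" and x :: "'j \<Rightarrow> real^2"
  assumes fin: "finite J" and ne: "J \<noteq> {}"
  defines "C \<equiv> convex hull ((\<lambda>j. (1 / (real (card J) + 1)) *\<^sub>R (x j + (\<Sum>i\<in>J. x i))) ` J)"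
  shows "qmp_P J x (closest_point C s) \<le> qmp_P J x s - (real (card J) + 1) * (norm (s - closest_point C s))\<^sup>2"
proof -
  define p where "p = closest_point C s"
  define n where "n = real (card J)"
  define M where "M = (\<lambda>j. (1 / (n + 1)) *\<^sub>R (x j + (\<Sum>i\<in>J. x i)))"
  have Cdef: "C = convex hull (M ` J)" unfolding C_def M_def n_def by simp
  have cC: "convex C" unfolding Cdef by simp
  have clC: "closed C" unfolding Cdef using fin
    by (intro compact_imp_closed finite_imp_compact_convex_hull) auto
  obtain k where k: "k \<in> J" "(MAX i\<in>J. (norm (p - x i))\<^sup>2) = (norm (p - x k))\<^sup>2"
    using max_attained[OF fin ne] by blast
  have Mk: "M k \<in> C" unfolding Cdef using k(1) by (intro hull_inc) auto
  have dot: "inner (s - p) (M k - p) \<le> 0"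
    unfolding p_def using closest_point_dot[OF cC clC Mk] .
  define a where "a = (\<lambda>i. inner (s - p) (p - x i))"
  have vec: "(\<Sum>i\<in>J. (p - x i)) + (p - x k) = (n + 1) *\<^sub>R (p - M k)"
  proof -
    have "(\<Sum>i\<in>J. (p - x i)) = n *\<^sub>R p - (\<Sum>i\<in>J. x i)"
      by (simp add: sum_subtractf n_def scaleR_conv_of_real)
    moreover have "(n + 1) *\<^sub>R M k = x k + (\<Sum>i\<in>J. x i)"
      unfolding M_def using n_def by simp
    ultimately show ?thesis by (simp add: algebra_simps)
  qed
  have "(\<Sum>i\<in>J. a i) + a k = inner (s - p) ((\<Sum>i\<in>J. (p - x i)) + (p - x k))"
    unfolding a_def by (simp add: inner_sum_right inner_add_right)
  also have "\<dots> = (n + 1) * inner (s - p) (p - M k)" using vec by simp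
  finally have asum: "(\<Sum>i\<in>J. a i) + a k \<ge> 0"
  proof -
    assume e: "(\<Sum>i\<in>J. a i) + a k = (n + 1) * inner (s - p) (p - M k)"
    have "inner (s - p) (p - M k) \<ge> 0" using dot by (simp add: inner_diff_right)
    moreover have "n + 1 \<ge> 0" unfolding n_def by simp
    ultimately show ?thesis using e by simp
  qed
  have split: "\<And>i. (norm (s - x i))\<^sup>2 = (norm (p - x i))\<^sup>2 + (norm (s - p))\<^sup>2 + 2 * a i"
    unfolding a_def by (rule pt_split)
  have "(\<Sum>i\<in>J. (norm (s - x i))\<^sup>2) = (\<Sum>i\<in>J. (norm (p - x i))\<^sup>2) + n * (norm (s - p))\<^sup>2 + 2 * (\<Sum>i\<in>J. a i)"
    by (simp add: split sum.distrib sum_distrib_left n_def)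
  moreover have "(norm (s - x k))\<^sup>2 \<le> (MAX i\<in>J. (norm (s - x i))\<^sup>2)"
    using fin k(1) by (intro Max_ge) auto
  ultimately have "qmp_P J x s \<ge> (\<Sum>i\<in>J. (norm (p - x i))\<^sup>2) + (norm (p - x k))\<^sup>2 + (n + 1) * (norm (s - p))\<^sup>2"
    unfolding qmp_P_def using split[of k] asum by (simp add: algebra_simps)
  moreover have "qmp_P J x p = (\<Sum>i\<in>J. (norm (p - x i))\<^sup>2) + (norm (p - x k))\<^sup>2"
    unfolding qmp_P_def using k(2) by simp
  ultimately show ?thesis unfolding p_def n_def by simp
qed

lemma mid_decrease:
  fixes J :: "'j set" and x :: "'j \<Rightarrow> real^2"
  assumes fin: "finite J" and ne: "J \<noteq> {}"
  shows "qmp_P J x ((1/2) *\<^sub>R (s + t)) \<le> (qmp_P J x s + qmp_P J x t) / 2 - real (card J) * (norm (s - t))\<^sup>2 / 4"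
proof -
  define m where "m = (1/2) *\<^sub>R (s + t)"
  obtain k where k: "k \<in> J" "(MAX i\<in>J. (norm (m - x i))\<^sup>2) = (norm (m - x k))\<^sup>2"
    using max_attained[OF fin ne] by blast
  have mid: "\<And>i. (norm (m - x i))\<^sup>2 = ((norm (s - x i))\<^sup>2 + (norm (t - x i))\<^sup>2)/2 - (norm (s - t))\<^sup>2 / 4"
    unfolding m_def by (rule pt_mid)
  have S: "(\<Sum>i\<in>J. (norm (m - x i))\<^sup>2) = ((\<Sum>i\<in>J. (norm (s - x i))\<^sup>2) + (\<Sum>i\<in>J. (norm (t - x i))\<^sup>2))/2 - real (card J) * (norm (s - t))\<^sup>2 / 4"
    by (simp add: mid sum_subtractf sum.distrib sum_divide_distrib[symmetric])
  have m1: "(norm (s - x k))\<^sup>2 \<le> (MAX i\<in>J. (norm (s - x i))\<^sup>2)"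
    using fin k(1) by (intro Max_ge) auto
  have m2: "(norm (t - x k))\<^sup>2 \<le> (MAX i\<in>J. (norm (t - x i))\<^sup>2)"
    using fin k(1) by (intro Max_ge) auto
  have "(MAX i\<in>J. (norm (m - x i))\<^sup>2) \<le> ((MAX i\<in>J. (norm (s - x i))\<^sup>2) + (MAX i\<in>J. (norm (t - x i))\<^sup>2))/2"
    by (rule aux1[OF k(2) mid[of k] m1 m2 zero_le_power2])
  then show ?thesis unfolding m_def[symmetric] qmp_P_def using S by (simp add: field_simps)
qed

theorem lemma4:
  fixes J :: "'j set" and x :: "'j \<Rightarrow> real^2"
  assumes "finite J" and "J \<noteq> {}"
  shows "qmp_centre J x \<in>
    convex hull ((\<lambda>j. (1 / (real (card J) + 1)) *\<^sub>R (x j + (\<Sum>i\<in>J. x i))) ` J)"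
proof -
  define C where "C = convex hull ((\<lambda>j. (1 / (real (card J) + 1)) *\<^sub>R (x j + (\<Sum>i\<in>J. x i))) ` J)"
  have compC: "compact C" unfolding C_def using assms(1)
    by (intro finite_imp_compact_convex_hull) auto
  have neC: "C \<noteq> {}" unfolding C_def using assms(2) by simp
  have cont: "continuous_on C (qmp_P J x)"
  proof -
    have "continuous_on C (\<lambda>s. MAX i\<in>J. (norm (s - x i))\<^sup>2)"
      using assms by (intro cont_Max_fam) (auto intro!: continuous_intros)
    then show ?thesis unfolding qmp_P_def[abs_def]
      by (auto intro!: continuous_intros)
  qed
  obtain s0 where s0: "s0 \<in> C" "\<And>y. y \<in> C \<Longrightarrow> qmp_P J x s0 \<le> qmp_P J x y"
    using continuous_attains_inf[OF compC neC cont] by blast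
  have clC: "closed C" using compC by (rule compact_imp_closed)
  have glob: "\<forall>t. qmp_P J x s0 \<le> qmp_P J x t"
  proof
    fix t
    have "closest_point C t \<in> C" using closest_point_in_set[OF clC neC] .
    then have "qmp_P J x s0 \<le> qmp_P J x (closest_point C t)" by (rule s0(2))
    also have "\<dots> \<le> qmp_P J x t"
      using proj_decrease[OF assms, of x t] unfolding C_def
      by (smt (verit) zero_le_power2 of_nat_0_le_iff mult_nonneg_nonneg)
    finally show "qmp_P J x s0 \<le> qmp_P J x t" .
  qed
  have uniq: "s = s0" if hs: "\<forall>t. qmp_P J x s \<le> qmp_P J x t" for s
  proof (rule ccontr)
    assume "s \<noteq> s0"
    then have "(norm (s - s0))\<^sup>2 > 0" by simp
    moreover have "real (card J) > 0" using assms by auto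
    ultimately have "real (card J) * (norm (s - s0))\<^sup>2 / 4 > 0" by simp
    moreover have "qmp_P J x s \<le> qmp_P J x ((1/2) *\<^sub>R (s + s0))" using hs by blast
    moreover have "qmp_P J x s0 \<le> qmp_P J x s" using glob by blast
    moreover have "qmp_P J x s \<le> qmp_P J x s0" using hs by blast
    ultimately show False using aux2 mid_decrease[OF assms, of x s s0]
      by blast
  qed
  have "qmp_centre J x = s0"
    unfolding qmp_centre_def using glob uniq by (rule the_equality)
  then show ?thesis using s0(1) unfolding C_def by simp
qed

end
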